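(* For every $n\ge 1$, the map $\Lambda_{\mathrm{poset}}$ is a bijection from $\mathcal{P}_n$ to $\mathcal{T}_n$, and its inverse is $\Xi_{\mathrm{poset}}$. (In particular $\Lambda_{\mathrm{poset}}(\Xi_{\mathrm{poset}}(T))=T$ for every $T\in\mathcal{T}_n$.)
   Context: For a finite set $S=\{x_1<\dots<x_n\}\subset\mathbb{R}$, define the partial order $\preceq_S$ on $[n]=\{1,\dots,n\}$ by $i\prec_S j$ iff $x_i+1<x_j$. A finite poset is a unit interval poset if it is isomorphic to $([n],\preceq_S)$ for some such $S$ (called a starting set). $\mathcal{P}_n$ denotes the set of unit interval posets with $n$ elements, up to isomorphism. A plane tree is either a single node, or a root node joined to a finite ordered (left-to-right) sequence of plane trees whose roots are its children; $\mathcal{T}_n$ is the set of plane trees with $n$ non-root nodes. The depth $d(u)$ of a node is its distance to the root. Map $\Lambda_{\mathrm{poset}}$: given $P=([n],\preceq_S)$ with $S=\{x_1<\dots<x_n\}$, set $x_0=x_1-2$ and build a tree with nodes $v_0,\dots,v_n$, root $v_0$, where for $i\in[n]$ the parent of $v_i$ is $v_j$ with $j\in\{0,\dots,n\}$ the largest index such that $x_j+1<x_i$; children of the same node are ordered left to right by decreasing index. This tree depends only on $\preceq_S$, and $\Lambda_{\mathrm{poset}}(P)$ is this tree. Map $\Xi_{\mathrm{poset}}$: given $T\in\mathcal{T}_n$, let $m$ be the maximal number of children of a node of $T$; for a non-root node $u$ let $c(u)=i$ if $u$ is the $i$-th child of its parent counted from right to left; with $u_0=\text{root},u_1,\dots,u_{d(u)}=u$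 the root-to-$u$ path, set $x_u=d(u)+\sum_{i=1}^{d(u)}c(u_i)(m+2)^{-i}$. With $S=\{x_u: u \text{ non-root}\}$ (an $n$-element set), $\Xi_{\mathrm{poset}}(T)=([n],\preceq_S)$. *)

theory Defs
  imports Main "HOL.Real"
begin

definition starting_sets :: "nat \<Rightarrow> real set set" where
  "starting_sets n = {S. finite S \<and> card S = n}"

definition xpt :: "real set \<Rightarrow> nat \<Rightarrow> real" where
  "xpt S i = (if i = 0 then sorted_list_of_set S ! 0 - 2
              else sorted_list_of_set S ! (i - 1))"

definition uip_order :: "nat \<Rightarrow> real set \<Rightarrow> (nat \<times> nat) set" where
  "uip_order n S = {(i, j). i \<in> {1..n} \<and> j \<in> {1..n} \<and> (i = j \<or> xpt S i + 1 < xpt S j)}"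

definition poset_iso :: "nat \<Rightarrow> (nat \<times> nat) set \<Rightarrow> (nat \<times> nat) set \<Rightarrow> bool" where
  "poset_iso n R R' \<longleftrightarrow> (\<exists>f. bij_betw f {1..n} {1..n} \<and>
      (\<forall>i\<in>{1..n}. \<forall>j\<in>{1..n}. (i, j) \<in> R \<longleftrightarrow> (f i, f j) \<in> R'))"

definition unit_interval_orders :: "nat \<Rightarrow> (nat \<times> nat) set set" where
  "unit_interval_orders n = {uip_order n S | S. S \<in> starting_sets n}"

definition iso_rel :: "nat \<Rightarrow> ((nat \<times> nat) set \<times> (nat \<times> nat) set) set" where
  "iso_rel n = {(R, R'). R \<in> unit_interval_orders n \<and> R' \<in> unit_interval_orders n \<and> poset_iso n R R'}"

definition Pn :: "nat \<Rightarrow> (nat \<times> nat) set set set" where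
  "Pn n = unit_interval_orders n // iso_rel n"

datatype ptree = Node "ptree list"

fun nnodes :: "ptree \<Rightarrow> nat" where
  "nnodes (Node ts) = sum_list (map (\<lambda>t. 1 + nnodes t) ts)"

definition Tn :: "nat \<Rightarrow> ptree set" where
  "Tn n = {T. nnodes T = n}"

definition parent :: "nat \<Rightarrow> real set \<Rightarrow> nat \<Rightarrow> nat" where
  "parent n S i = Max {j. j \<le> n \<and> xpt S j + 1 < xpt S i}"

text \<open>Children of v_k, listed left to right by decreasing index.
  (The condition k < i is automatic for a parent, and ensures termination.)\<close>
definition children :: "nat \<Rightarrow> real set \<Rightarrow> nat \<Rightarrow> nat list" where
  "children n S k = filter (\<lambda>i. k < i \<and> parent n S i = k) (rev [1..<Suc n])"

function build :: "nat \<Rightarrow> real set \<Rightarrow> nat \<Rightarrow> ptree" where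
  "build n S k = Node (map (build n S) (children n S k))"
  by pat_completeness auto
termination
  by (relation "measure (\<lambda>(n, S, k). Suc n - k)") (auto simp: children_def)

definition Lambda_tree :: "nat \<Rightarrow> real set \<Rightarrow> ptree" where
  "Lambda_tree n S = build n S 0"

definition Lambda_poset :: "nat \<Rightarrow> (nat \<times> nat) set set \<Rightarrow> ptree" where
  "Lambda_poset n C = Lambda_tree n (SOME S. S \<in> starting_sets n \<and> uip_order n S \<in> C)"

fun maxch :: "ptree \<Rightarrow> nat" where
  "maxch (Node ts) = Max (set (length ts # map maxch ts))"

text \<open>coords m d \<sigma> T: values x_u for the non-root nodes u of the subtree T, whose root
  is at depth d with partial sum \<sigma>. In coordsL, k is c(u) for the head child
  (position counted from right to left).\<close>
fun coords :: "nat \<Rightarrow> nat \<Rightarrow> real \<Rightarrow> ptree \<Rightarrow> real list"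
and coordsL :: "nat \<Rightarrow> nat \<Rightarrow> real \<Rightarrow> nat \<Rightarrow> ptree list \<Rightarrow> real list" where
  "coords m d \<sigma> (Node ts) = coordsL m d \<sigma> (length ts) ts"
| "coordsL m d \<sigma> k [] = []"
| "coordsL m d \<sigma> k (t # ts) =
     (let \<sigma>' = \<sigma> + real k / (real m + 2) ^ (Suc d)
      in (real (Suc d) + \<sigma>') # coords m (Suc d) \<sigma>' t) @ coordsL m d \<sigma> (k - 1) ts"

definition Xi_set :: "ptree \<Rightarrow> real set" where
  "Xi_set T = set (coords (maxch T) 0 0 T)"

definition Xi_poset :: "nat \<Rightarrow> ptree \<Rightarrow> (nat \<times> nat) set set" where
  "Xi_poset n T = iso_rel n `` {uip_order n (Xi_set T)}"

end

theory Submission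
  imports Defs
begin



declare build.simps[simp del]

lemma xpt_props:
  assumes "finite S" "card S = n" "n \<ge> 1"
  shows "\<And>i j. i < j \<Longrightarrow> j \<le> n \<Longrightarrow> xpt S i < xpt S j"
    and "xpt S ` {1..n} = S"
    and "xpt S 0 = xpt S 1 - 2"
proof -
  let ?L = "sorted_list_of_set S"
  have len: "length ?L = n" using assms by simp
  have ss: "sorted_wrt (<) ?L" by simp
  show "xpt S i < xpt S j" if "i < j" "j \<le> n" for i j
  proof (cases "i = 0")
    case True
    have "?L ! 0 \<le> ?L ! (j - 1)" using ss len that
      by (intro sorted_nth_mono) auto
    then show ?thesis using True that by (simp add: xpt_def)
  next
    case False
    have "?L ! (i-1) < ?L ! (j - 1)" using sorted_wrt_nth_less[OF ss, of "i-1" "j-1"] len that False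
      by auto
    then show ?thesis using False that by (simp add: xpt_def)
  qed
  show "xpt S ` {1..n} = S"
  proof -
    have "xpt S ` {1..n} = (\<lambda>i. ?L ! i) ` {0..<n}"
    proof (rule set_eqI, rule iffI)
      fix x assume "x \<in> xpt S ` {1..n}"
      then obtain i where "i \<in> {1..n}" "x = xpt S i" by auto
      then show "x \<in> (\<lambda>i. ?L ! i) ` {0..<n}" by (auto simp: xpt_def intro!: image_eqI[of _ _ "i - 1"])
    next
      fix x assume "x \<in> (\<lambda>i. ?L ! i) ` {0..<n}"
      then obtain i where "i < n" "x = ?L ! i" by auto
      then show "x \<in> xpt S ` {1..n}" by (auto simp: xpt_def intro!: image_eqI[of _ _ "Suc i"])
    qed
    also have "\<dots> = set ?L" using len by (auto simp: in_set_conv_nth)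
    finally show ?thesis using assms by simp
  qed
  show "xpt S 0 = xpt S 1 - 2" by (simp add: xpt_def)
qed

lemma xpt_mono:
  assumes "finite S" "card S = n" "n \<ge> 1" "i \<le> j" "j \<le> n"
  shows "xpt S i \<le> xpt S j"
  using xpt_props(1)[OF assms(1-3), of i j] assms by (cases "i = j") auto

lemma xpt_less_iff:
  assumes "finite S" "card S = n" "n \<ge> 1" "i \<le> n" "j \<le> n"
  shows "xpt S i < xpt S j \<longleftrightarrow> i < j"
  using xpt_props(1)[OF assms(1-3), of i j] xpt_props(1)[OF assms(1-3), of j i] assms
  by (metis less_asym linorder_neqE_nat order_less_irrefl)

lemma xpt_le_iff:
  assumes "finite S" "card S = n" "n \<ge> 1" "i \<le> n" "j \<le> n"
  shows "xpt S i \<le> xpt S j \<longleftrightarrow> i \<le> j"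
  using xpt_less_iff[OF assms(1-3) assms(5,4)] by (simp add: not_less[symmetric])

lemma parent_props:
  assumes "finite S" "card S = n" "n \<ge> 1" "i \<in> {1..n}"
  shows "parent n S i < i" "xpt S (parent n S i) + 1 < xpt S i"
    "\<And>j. j \<le> n \<Longrightarrow> xpt S j + 1 < xpt S i \<Longrightarrow> j \<le> parent n S i"
proof -
  let ?A = "{j. j \<le> n \<and> xpt S j + 1 < xpt S i}"
  have fin: "finite ?A" by simp
  have "xpt S 1 \<le> xpt S i" using xpt_mono[OF assms(1-3), of 1 i] assms(4) by auto
  then have "0 \<in> ?A" using xpt_props(3)[OF assms(1-3)] by auto
  then have ne: "?A \<noteq> {}" by auto
  have mem: "parent n S i \<in> ?A" unfolding parent_def using Max_in[OF fin ne] .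
  then show "xpt S (parent n S i) + 1 < xpt S i" by simp
  show "j \<le> parent n S i" if "j \<le> n" "xpt S j + 1 < xpt S i" for j
    unfolding parent_def using that by (intro Max_ge[OF fin]) auto
  show "parent n S i < i"
  proof (rule ccontr)
    assume "\<not> parent n S i < i"
    then have "xpt S i \<le> xpt S (parent n S i)" using mem assms
      by (intro xpt_mono[OF assms(1-3)]) auto
    then show False using mem by simp
  qed
qed

lemma parent_mono:
  assumes "finite S" "card S = n" "n \<ge> 1" "1 \<le> i" "i \<le> i'" "i' \<le> n"
  shows "parent n S i \<le> parent n S i'"
proof -
  have "xpt S i \<le> xpt S i'" using assms by (intro xpt_mono) auto
  moreover have "parent n S i < i" "xpt S (parent n S i) + 1 < xpt S i"
    using parent_props[OF assms(1-3), of i] assms by auto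
  ultimately show ?thesis using assms by (intro parent_props(3)[OF assms(1-3)]) auto
qed

lemma uip_char:
  assumes "finite S" "card S = n" "n \<ge> 1"
  shows "(i, j) \<in> uip_order n S \<longleftrightarrow> i \<in> {1..n} \<and> j \<in> {1..n} \<and> (i = j \<or> i \<le> parent n S j)"
proof -
  have "xpt S i + 1 < xpt S j \<longleftrightarrow> i \<le> parent n S j" if "i \<in> {1..n}" "j \<in> {1..n}"
  proof
    assume "xpt S i + 1 < xpt S j" then show "i \<le> parent n S j"
      using that by (intro parent_props(3)[OF assms]) auto
  next
    assume "i \<le> parent n S j"
    moreover have "parent n S j < j" "xpt S (parent n S j) + 1 < xpt S j"
      using parent_props[OF assms, of j] that by auto
    ultimately show "xpt S i + 1 < xpt S j" using xpt_mono[OF assms, of i "parent n S j"] that by auto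
  qed
  then show ?thesis unfolding uip_order_def by auto
qed

definition monp :: "nat \<Rightarrow> (nat \<Rightarrow> nat) \<Rightarrow> bool" where
  "monp n p \<longleftrightarrow> (\<forall>i i'. 1 \<le> i \<longrightarrow> i \<le> i' \<longrightarrow> i' \<le> n \<longrightarrow> p i \<le> p i')"

definition Mc :: "nat \<Rightarrow> (nat \<Rightarrow> nat) \<Rightarrow> nat \<Rightarrow> nat" where
  "Mc n p k = card {i\<in>{1..n}. p i < k}"

lemma downclosed_interval:
  assumes "A \<subseteq> {1..(n::nat)}" "\<And>i i'. i \<in> A \<Longrightarrow> 1 \<le> i' \<Longrightarrow> i' \<le> i \<Longrightarrow> i' \<in> A"
  shows "A = {1..card A}"
proof (cases "A = {}")
  case True then show ?thesis by simp
next
  case False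
  have fin: "finite A" using assms(1) finite_subset by blast
  have "A = {1..Max A}"
  proof
    show "A \<subseteq> {1..Max A}" using assms(1) Max_ge[OF fin] by auto
    show "{1..Max A} \<subseteq> A" using assms(2)[OF Max_in[OF fin False]] by auto
  qed
  then show ?thesis by (metis card_atLeastAtMost diff_Suc_1)
qed

lemma Mc_interval:
  assumes "monp n p"
  shows "{i\<in>{1..n}. p i < k} = {1..Mc n p k}"
  unfolding Mc_def
proof (rule downclosed_interval)
  show "{i \<in> {1..n}. p i < k} \<subseteq> {1..n}" by auto
  fix i i' assume "i \<in> {i \<in> {1..n}. p i < k}" "1 \<le> i'" "i' \<le> i"
  then show "i' \<in> {i \<in> {1..n}. p i < k}" using assms unfolding monp_def
    by (auto intro: le_less_trans)
qed

lemma Mc_iff: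
  assumes "monp n p" "i \<in> {1..n}"
  shows "p i < k \<longleftrightarrow> i \<le> Mc n p k"
  using Mc_interval[OF assms(1), of k] assms(2) by (metis (no_types, lifting) atLeastAtMost_iff mem_Collect_eq)

lemma Mc_uniq:
  assumes "monp n p" "monp n p'" "\<forall>i\<in>{1..n}. p i < i \<and> p' i < i"
    "\<forall>k<n. Mc n p k = Mc n p' k" "i \<in> {1..n}"
  shows "p i = p' i"
proof (rule ccontr)
  assume "p i \<noteq> p' i"
  then consider "p i < p' i" | "p' i < p i" by linarith
  then show False
  proof cases
    case 1
    have "p' i < i" using assms(3,5) by blast
    then have "p' i < n" using assms(5) by auto
    then have "Mc n p (p' i) = Mc n p' (p' i)" using assms(4) by auto
    then show False using Mc_iff[OF assms(1,5), of "p' i"] Mc_iff[OF assms(2,5), of "p' i"] 1 by auto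
  next
    case 2
    have "p i < i" using assms(3,5) by blast
    then have "p i < n" using assms(5) by auto
    then have "Mc n p (p i) = Mc n p' (p i)" using assms(4) by auto
    then show False using Mc_iff[OF assms(1,5), of "p i"] Mc_iff[OF assms(2,5), of "p i"] 2 by auto
  qed
qed

lemma Mc_Suc: "Mc n p (Suc k) = Mc n p k + card {i\<in>{1..n}. p i = k}"
proof -
  have "{i\<in>{1..n}. p i < Suc k} = {i\<in>{1..n}. p i < k} \<union> {i\<in>{1..n}. p i = k}" by auto
  moreover have "card ({i\<in>{1..n}. p i < k} \<union> {i\<in>{1..n}. p i = k}) = card {i\<in>{1..n}. p i < k} + card {i\<in>{1..n}. p i = k}"
    by (rule card_Un_disjoint) auto
  ultimately show ?thesis unfolding Mc_def by simp
qed

lemma Mc_0: "Mc n p 0 = 0" by (simp add: Mc_def)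

lemma build_cong:
  assumes "\<forall>i\<in>{1..n}. parent n S i = parent n S' i"
  shows "build n S k = build n S' k"
  using assms
proof (induction n S k rule: build.induct)
  case (1 n S k)
  have ch: "children n S k = children n S' k" using 1(2) unfolding children_def by (intro filter_cong) auto
  have "build n S k = Node (map (build n S) (children n S k))" by (simp add: build.simps)
  also have "\<dots> = Node (map (build n S') (children n S' k))"
    unfolding ch using 1 ch by (auto intro!: map_cong)
  also have "\<dots> = build n S' k" by (simp add: build.simps)
  finally show ?case .
qed

lemma sum_list_map_rev: "sum_list (map f (rev xs)) = (sum_list (map f xs) :: 'a::comm_monoid_add)"
  by (induction xs) (simp_all add: add.commute)

function bfs :: "ptree list \<Rightarrow> nat list" where
  "bfs [] = []"
| "bfs (Node ts # q) = length ts # bfs (q @ rev ts)"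
  by pat_completeness auto
termination
proof (relation "measure (\<lambda>q. sum_list (map size q))")
  fix ts q
  show "(q @ rev ts, Node ts # q) \<in> measure (\<lambda>q. sum_list (map size q))"
    by (simp add: size_list_conv_sum_list sum_list_map_rev)
qed simp

lemma bfs_sum: "sum_list (bfs q) = sum_list (map nnodes q)"
proof (induction q rule: bfs.induct)
  case 1 then show ?case by simp
next
  case (2 ts q)
  have "nnodes (Node ts) = length ts + sum_list (map nnodes ts)"
    by (induction ts) auto
  then show ?case using 2 by (simp add: sum_list_map_rev)
qed

lemma monp_parent:
  assumes "finite S" "card S = n" "n \<ge> 1"
  shows "monp n (parent n S)"
  unfolding monp_def using parent_mono[OF assms] by blast

lemma children_rev:
  assumes "finite S" "card S = n" "n \<ge> 1"
  shows "rev (children n S k) = [Suc (Mc n (parent n S) k)..<Suc (Mc n (parent n S) (Suc k))]"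
proof -
  let ?p = "parent n S"
  have mp: "monp n ?p" using monp_parent[OF assms] .
  have "rev (children n S k) = filter (\<lambda>i. k < i \<and> ?p i = k) [1..<Suc n]"
    unfolding children_def by (simp add: rev_filter)
  also have "\<dots> = [Suc (Mc n ?p k)..<Suc (Mc n ?p (Suc k))]"
  proof (rule sorted_distinct_set_unique)
    have "set (filter (\<lambda>i. k < i \<and> ?p i = k) [1..<Suc n]) = {i\<in>{1..n}. ?p i < Suc k} - {i\<in>{1..n}. ?p i < k}"
      using parent_props(1)[OF assms] by fastforce
    also have "\<dots> = {1..Mc n ?p (Suc k)} - {1..Mc n ?p k}"
      using Mc_interval[OF mp] by simp
    also have "\<dots> = set [Suc (Mc n ?p k)..<Suc (Mc n ?p (Suc k))]" by auto
    finally show "set (filter (\<lambda>i. k < i \<and> ?p i = k) [1..<Suc n]) = set [Suc (Mc n ?p k)..<Suc (Mc n ?p (Suc k))]" .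
  qed (simp_all del: upt_Suc add: sorted_wrt_filter)
  finally show ?thesis .
qed

lemma Mc_full:
  assumes "finite S" "card S = n" "n \<ge> 1" "k \<ge> n"
  shows "Mc n (parent n S) k = n"
proof -
  have "{i\<in>{1..n}. parent n S i < k} = {1..n}"
    using parent_props(1)[OF assms(1-3)] assms(4) by fastforce
  then show ?thesis unfolding Mc_def by simp
qed

lemma bfs_inv:
  assumes "finite S" "card S = n" "n \<ge> 1" "k \<le> Suc n"
  shows "bfs (map (build n S) [k..<Suc (Mc n (parent n S) k)]) =
         map (\<lambda>j. card {i\<in>{1..n}. parent n S i = j}) [k..<Suc n]"
  using assms(4)
proof (induction "Suc n - k" arbitrary: k)
  case 0
  then have "k = Suc n" by simp
  then show ?case using Mc_full[OF assms(1-3), of k] by simp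
next
  case (Suc d)
  let ?p = "parent n S"
  let ?b = "build n S"
  let ?c = "\<lambda>j. card {i\<in>{1..n}. ?p i = j}"
  have kn: "k \<le> n" using Suc by simp
  have kM: "k \<le> Mc n ?p k"
  proof (cases "k = 0")
    case False
    then have "?p k < k" using parent_props(1)[OF assms(1-3), of k] kn by auto
    then show ?thesis using Mc_iff[OF monp_parent[OF assms(1-3)], of k k] kn False by auto
  qed simp
  have MM: "Mc n ?p k \<le> Mc n ?p (Suc k)" by (simp add: Mc_Suc)
  have bk: "?b k = Node (map ?b (children n S k))" by (simp add: build.simps)
  have "[k..<Suc (Mc n ?p k)] = k # [Suc k..<Suc (Mc n ?p k)]" using kM by (simp add: upt_conv_Cons)
  then have "bfs (map ?b [k..<Suc (Mc n ?p k)]) =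
      length (children n S k) # bfs (map ?b [Suc k..<Suc (Mc n ?p k)] @ rev (map ?b (children n S k)))"
    by (simp only: list.map bk bfs.simps length_map)
  also have "rev (map ?b (children n S k)) = map ?b [Suc (Mc n ?p k)..<Suc (Mc n ?p (Suc k))]"
    by (simp only: rev_map children_rev[OF assms(1-3)])
  also have "map ?b [Suc k..<Suc (Mc n ?p k)] @ map ?b [Suc (Mc n ?p k)..<Suc (Mc n ?p (Suc k))]
      = map ?b [Suc k..<Suc (Mc n ?p (Suc k))]"
  proof -
    have "[Suc k..<Suc (Mc n ?p k)] @ [Suc (Mc n ?p k)..<Suc (Mc n ?p (Suc k))] = [Suc k..<Suc (Mc n ?p (Suc k))]"
      using upt_add_eq_append[of "Suc k" "Suc (Mc n ?p k)" "Mc n ?p (Suc k) - Mc n ?p k"] kM MM by simp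
    then show ?thesis by (metis map_append)
  qed
  also have "bfs (map ?b [Suc k..<Suc (Mc n ?p (Suc k))]) = map ?c [Suc k..<Suc n]"
    using Suc by simp
  also have "length (children n S k) = ?c k"
  proof -
    have "length (children n S k) = length (rev (children n S k))" by simp
    also have "\<dots> = Mc n ?p (Suc k) - Mc n ?p k" by (simp add: children_rev[OF assms(1-3)] del: upt_Suc)
    also have "\<dots> = ?c k" by (simp add: Mc_Suc)
    finally show ?thesis .
  qed
  finally have "bfs (map ?b [k..<Suc (Mc n ?p k)]) = ?c k # map ?c [Suc k..<Suc n]" .
  moreover have "[k..<Suc n] = k # [Suc k..<Suc n]" using kn by (simp add: upt_conv_Cons del: upt_Suc)
  ultimately show ?case by (simp only: list.map)
qed

lemma bfs_Lambda:
  assumes "finite S" "card S = n" "n \<ge> 1"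
  shows "bfs [Lambda_tree n S] = map (\<lambda>j. card {i\<in>{1..n}. parent n S i = j}) [0..<Suc n]"
  using bfs_inv[OF assms, of 0] by (simp add: Mc_0 Lambda_tree_def)

lemma sum_c: "sum_list (map (\<lambda>j. card {i\<in>{1..n}. p i = j}) [0..<k]) = Mc n p k"
  by (induction k) (auto simp: Mc_0 Mc_Suc)

lemma nnodes_Lambda:
  assumes "finite S" "card S = n" "n \<ge> 1"
  shows "nnodes (Lambda_tree n S) = n"
proof -
  have "nnodes (Lambda_tree n S) = sum_list (bfs [Lambda_tree n S])" by (simp add: bfs_sum)
  also have "\<dots> = Mc n (parent n S) (Suc n)" by (simp only: bfs_Lambda[OF assms] sum_c)
  also have "\<dots> = n" using Mc_full[OF assms] by simp
  finally show ?thesis .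
qed

lemma Lambda_inj_parent:
  assumes "finite S" "card S = n" "finite S'" "card S' = n" "n \<ge> 1"
    "Lambda_tree n S = Lambda_tree n S'"
  shows "\<forall>i\<in>{1..n}. parent n S i = parent n S' i"
proof -
  let ?c = "\<lambda>j. card {i\<in>{1..n}. parent n S i = j}"
  let ?c' = "\<lambda>j. card {i\<in>{1..n}. parent n S' i = j}"
  have "map ?c [0..<Suc n] = map ?c' [0..<Suc n]"
    using bfs_Lambda[OF assms(1,2,5)] bfs_Lambda[OF assms(3,4,5)] assms(6) by simp
  then have cc: "\<forall>k\<le>n. ?c k = ?c' k" unfolding map_eq_conv by (simp del: upt_Suc)
  have "\<forall>k\<le>Suc n. Mc n (parent n S) k = Mc n (parent n S') k"
  proof (intro allI impI)
    fix k show "k \<le> Suc n \<Longrightarrow> Mc n (parent n S) k = Mc n (parent n S') k"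
      by (induction k) (use cc in \<open>auto simp: Mc_0 Mc_Suc\<close>)
  qed
  then show ?thesis
    using Mc_uniq[OF monp_parent[OF assms(1,2,5)] monp_parent[OF assms(3,4,5)]]
      parent_props(1)[OF assms(1,2,5)] parent_props(1)[OF assms(3,4,5)] by auto
qed

lemma downset_card:
  assumes "finite S" "card S = n" "n \<ge> 1" "j \<in> {1..n}"
  shows "{i\<in>{1..n}. (i, j) \<in> uip_order n S \<and> i \<noteq> j} = {1..parent n S j}"
  using uip_char[OF assms(1-3)] parent_props(1)[OF assms] assms(4) by auto

lemma iso_parent:
  assumes "finite S" "card S = n" "finite S'" "card S' = n" "n \<ge> 1"
    "poset_iso n (uip_order n S) (uip_order n S')"
  shows "\<forall>i\<in>{1..n}. parent n S i = parent n S' i"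
proof -
  obtain f where bij: "bij_betw f {1..n} {1..n}" and
    pres: "\<forall>i\<in>{1..n}. \<forall>j\<in>{1..n}. (i, j) \<in> uip_order n S \<longleftrightarrow> (f i, f j) \<in> uip_order n S'"
    using assms(6) unfolding poset_iso_def by blast
  have inj: "inj_on f {1..n}" and im: "f ` {1..n} = {1..n}" using bij by (auto simp: bij_betw_def)
  have pf: "parent n S' (f j) = parent n S j" if j: "j \<in> {1..n}" for j
  proof -
    have fj: "f j \<in> {1..n}" using j im by auto
    have "{i\<in>{1..n}. (i, f j) \<in> uip_order n S' \<and> i \<noteq> f j} = f ` {i\<in>{1..n}. (i, j) \<in> uip_order n S \<and> i \<noteq> j}"
    proof (rule set_eqI, rule iffI)
      fix x assume x: "x \<in> {i\<in>{1..n}. (i, f j) \<in> uip_order n S' \<and> i \<noteq> f j}"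
      then obtain i where i: "i \<in> {1..n}" "x = f i" using im by (metis (no_types, lifting) imageE mem_Collect_eq)
      then show "x \<in> f ` {i\<in>{1..n}. (i, j) \<in> uip_order n S \<and> i \<noteq> j}"
        using x pres j by auto
    next
      fix x assume "x \<in> f ` {i\<in>{1..n}. (i, j) \<in> uip_order n S \<and> i \<noteq> j}"
      then obtain i where i: "i \<in> {1..n}" "x = f i" "(i, j) \<in> uip_order n S" "i \<noteq> j" by auto
      then show "x \<in> {i\<in>{1..n}. (i, f j) \<in> uip_order n S' \<and> i \<noteq> f j}"
        using pres j inj im inj_on_eq_iff[OF inj i(1) j] by auto
    qed
    then have "card {1..parent n S' (f j)} = card (f ` {1..parent n S j})"
      using downset_card[OF assms(3-5) fj] downset_card[OF assms(1,2,5) j] by simp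
    also have "\<dots> = card {1..parent n S j}"
      using parent_props(1)[OF assms(1,2,5) j] j
      by (intro card_image inj_on_subset[OF inj]) auto
    finally show ?thesis by simp
  qed
  have "Mc n (parent n S) k = Mc n (parent n S') k" for k
  proof -
    have "{i\<in>{1..n}. parent n S' i < k} = f ` {i\<in>{1..n}. parent n S i < k}"
    proof (rule set_eqI, rule iffI)
      fix x assume x: "x \<in> {i\<in>{1..n}. parent n S' i < k}"
      then obtain i where i: "i \<in> {1..n}" "x = f i" using im by (metis (no_types, lifting) imageE mem_Collect_eq)
      then show "x \<in> f ` {i\<in>{1..n}. parent n S i < k}" using x pf by auto
    next
      fix x assume "x \<in> f ` {i\<in>{1..n}. parent n S i < k}"
      then show "x \<in> {i\<in>{1..n}. parent n S' i < k}" using pf im by auto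
    qed
    moreover have "card (f ` {i\<in>{1..n}. parent n S i < k}) = card {i\<in>{1..n}. parent n S i < k}"
      by (rule card_image, rule inj_on_subset[OF inj]) auto
    ultimately show ?thesis unfolding Mc_def by simp
  qed
  then show ?thesis
    using Mc_uniq[OF monp_parent[OF assms(1,2,5)] monp_parent[OF assms(3,4,5)]]
      parent_props(1)[OF assms(1,2,5)] parent_props(1)[OF assms(3,4,5)] by auto
qed




fun al :: "ptree \<Rightarrow> nat list list" and alL :: "nat \<Rightarrow> ptree list \<Rightarrow> nat list list" where
  "al (Node ts) = alL (length ts) ts"
| "alL k [] = []"
| "alL k (t # ts) = ([k] # map ((#) k) (al t)) @ alL (k - 1) ts"

definition AT :: "ptree \<Rightarrow> nat list set" where
  "AT T = insert [] (set (al T))"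

fun subt :: "ptree \<Rightarrow> nat list \<Rightarrow> ptree" where
  "subt t [] = t"
| "subt (Node ts) (c # a) = subt (ts ! (length ts - c)) a"

lemma setL: "set (alL k ts) = {c # a | c a. \<exists>j<length ts. c = k - j \<and> (a = [] \<or> a \<in> set (al (ts ! j)))}"
proof (induction ts arbitrary: k)
  case Nil then show ?case by simp
next
  case (Cons t ts)
  show ?case
  proof (rule set_eqI, rule iffI)
    fix x assume "x \<in> set (alL k (t # ts))"
    then consider "x = [k]" | a where "x = k # a" "a \<in> set (al t)" | "x \<in> set (alL (k - 1) ts)" by auto
    then show "x \<in> {c # a | c a. \<exists>j<length (t # ts). c = k - j \<and> (a = [] \<or> a \<in> set (al ((t # ts) ! j)))}"
    proof cases
      case 3
      then obtain c a j where "x = c # a" "j < length ts" "c = k - 1 - j" "a = [] \<or> a \<in> set (al (ts ! j))"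
        using Cons by auto
      then show ?thesis by (intro CollectI exI[of _ c] exI[of _ a]) (auto intro!: exI[of _ "Suc j"])
    qed force+
  next
    fix x assume "x \<in> {c # a | c a. \<exists>j<length (t # ts). c = k - j \<and> (a = [] \<or> a \<in> set (al ((t # ts) ! j)))}"
    then obtain c a j where x: "x = c # a" "j < length (t # ts)" "c = k - j" "a = [] \<or> a \<in> set (al ((t # ts) ! j))"
      by blast
    show "x \<in> set (alL k (t # ts))"
    proof (cases j)
      case 0 then show ?thesis using x by auto
    next
      case (Suc j')
      then have "x \<in> set (alL (k - 1) ts)" using x Cons by auto
      then show ?thesis by simp
    qed
  qed
qed

lemma AT_Cons: "c # a \<in> AT (Node ts) \<longleftrightarrow> 1 \<le> c \<and> c \<le> length ts \<and> a \<in> AT (ts ! (length ts - c))"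
proof
  assume "c # a \<in> AT (Node ts)"
  then obtain j where "j < length ts" "c = length ts - j" "a = [] \<or> a \<in> set (al (ts ! j))"
    unfolding AT_def using setL[of "length ts" ts] by auto
  then show "1 \<le> c \<and> c \<le> length ts \<and> a \<in> AT (ts ! (length ts - c))"
    unfolding AT_def by (auto simp: diff_diff_cancel)
next
  assume h: "1 \<le> c \<and> c \<le> length ts \<and> a \<in> AT (ts ! (length ts - c))"
  then have "length ts - c < length ts" "c = length ts - (length ts - c)" by auto
  then show "c # a \<in> AT (Node ts)"
    unfolding AT_def using h setL[of "length ts" ts] unfolding AT_def by auto
qed

lemma AT_Nil[simp]: "[] \<in> AT T" by (simp add: AT_def)

lemma al_nonempty: "[] \<notin> set (al T)"
  by (cases T) (auto simp: setL)

lemma AT_snoc: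
  assumes "pre \<in> AT T" "subt T pre = Node ts"
  shows "pre @ [c] \<in> AT T \<longleftrightarrow> 1 \<le> c \<and> c \<le> length ts"
    and "pre @ [c] \<in> AT T \<Longrightarrow> subt T (pre @ [c]) = ts ! (length ts - c)"
  using assms
proof (induction pre arbitrary: T)
  case Nil
  { case 1 then show ?case by (auto simp: AT_Cons) }
  { case 2 then show ?case by auto }
next
  case (Cons c' pre)
  { case 1
    obtain us where T: "T = Node us" by (cases T)
    then show ?case using 1 Cons.IH(1)[of "us ! (length us - c')"] by (simp add: AT_Cons)
  }
  { case 2
    obtain us where T: "T = Node us" by (cases T)
    then show ?case using 2 Cons.IH(2)[of "us ! (length us - c')"] by (simp add: AT_Cons)
  }
qed

lemma AT_prefix: "pre @ a \<in> AT T \<Longrightarrow> pre \<in> AT T"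
proof (induction pre arbitrary: T)
  case (Cons c pre)
  obtain us where T: "T = Node us" by (cases T)
  then show ?case using Cons by (simp add: AT_Cons)
qed simp

lemma maxch_ge: "length ts \<le> maxch (Node ts)" "t \<in> set ts \<Longrightarrow> maxch t \<le> maxch (Node ts)"
  by (auto intro!: Max_ge)

lemma AT_digits: "a \<in> AT T \<Longrightarrow> \<forall>c\<in>set a. 1 \<le> c \<and> c \<le> maxch T"
proof (induction a arbitrary: T)
  case (Cons c a)
  obtain ts where T: "T = Node ts" by (cases T)
  then have h: "1 \<le> c" "c \<le> length ts" "a \<in> AT (ts ! (length ts - c))" using Cons.prems by (auto simp: AT_Cons)
  then have "ts ! (length ts - c) \<in> set ts" by auto
  then have mt: "maxch (ts ! (length ts - c)) \<le> maxch T" using maxch_ge T by (auto simp del: maxch.simps)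
  have c1: "c \<le> maxch T" using h(2) maxch_ge(1)[of ts] T by (simp del: maxch.simps)
  show ?case using Cons.IH[OF h(3)] h(1) c1 mt by (force simp del: maxch.simps)
qed simp




lemma al_length: "length (al t) = nnodes t" "length (alL k ts) = sum_list (map (\<lambda>t. 1 + nnodes t) ts)"
  by (induction t and k ts rule: al_alL.induct) auto

lemma al_distinct: "distinct (al t)" "length ts \<le> k \<Longrightarrow> distinct (alL k ts)"
proof (induction t and k ts rule: al_alL.induct)
  case (3 k t ts)
  have d1: "distinct ([k] # map ((#) k) (al t))" using 3(1) al_nonempty[of t] by (auto simp: distinct_map)
  have "hd x \<le> k - 1" if "x \<in> set (alL (k - 1) ts)" for x using that by (auto simp: setL)
  moreover have "k \<ge> 1" using 3(3) by simp
  ultimately have "x \<notin> set ([k] # map ((#) k) (al t))" if "x \<in> set (alL (k - 1) ts)" for x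
    using that by fastforce
  then show ?case using d1 3 by auto
qed auto

definition nm :: "nat \<Rightarrow> nat list \<Rightarrow> nat" where
  "nm M a = foldl (\<lambda>x c. M * x + c) 0 a"

definition val :: "nat \<Rightarrow> nat list \<Rightarrow> real" where
  "val M a = real (length a) + real (nm M a) / real M ^ length a"

lemma nm_Nil[simp]: "nm M [] = 0" by (simp add: nm_def)
lemma nm_snoc[simp]: "nm M (a @ [c]) = M * nm M a + c" by (simp add: nm_def)

lemma coords_al:
  "\<forall>pre. d = length pre \<longrightarrow> \<sigma> = real (nm (m+2) pre) / (real m + 2) ^ length pre \<longrightarrow>
     coords m d \<sigma> t = map (\<lambda>a. val (m+2) (pre @ a)) (al t)"
  "\<forall>pre. d = length pre \<longrightarrow> \<sigma> = real (nm (m+2) pre) / (real m + 2) ^ length pre \<longrightarrow>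
     coordsL m d \<sigma> k ts = map (\<lambda>a. val (m+2) (pre @ a)) (alL k ts)"
proof (induction m d \<sigma> t and m d \<sigma> k ts rule: coords_coordsL.induct)
  case (1 m d \<sigma> ts) then show ?case by simp
next
  case (2 m d \<sigma> k) then show ?case by simp
next
  case (3 m d \<sigma> k t ts)
  show ?case
  proof (intro allI impI)
    fix pre assume d: "d = length pre" and s: "\<sigma> = real (nm (m+2) pre) / (real m + 2) ^ length pre"
    define \<sigma>' where "\<sigma>' = \<sigma> + real k / (real m + 2) ^ (Suc d)"
    have pos: "(real m + 2) ^ length pre > 0" by simp
    have aux: "N / q + K / (B * q) = (B * N + K) / (B * q)" if "B > 0" "q > 0" for N q K B :: real
      using that by (simp add: field_simps)
    have e: "real (nm (m+2) (pre@[k])) = (real m + 2) * real (nm (m+2) pre) + real k" by (simp add: algebra_simps)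
    have s': "\<sigma>' = real (nm (m+2) (pre @ [k])) / (real m + 2) ^ length (pre @ [k])"
      unfolding \<sigma>'_def s d e length_append_singleton power_Suc
      by (rule aux) (use pos in auto)
    have v: "real (Suc d) + \<sigma>' = val (m+2) (pre @ [k])"
      unfolding val_def s' d by (simp add: add.commute)
    have IH1: "coords m (Suc d) \<sigma>' t = map (\<lambda>a. val (m+2) ((pre @ [k]) @ a)) (al t)"
    proof -
      have h: "Suc d = length (pre @ [k]) \<longrightarrow> \<sigma>' = real (nm (m+2) (pre @ [k])) / (real m + 2) ^ length (pre @ [k]) \<longrightarrow>
        coords m (Suc d) \<sigma>' t = map (\<lambda>a. val (m+2) ((pre @ [k]) @ a)) (al t)"
        using 3(1)[of \<sigma>', OF \<sigma>'_def] by blast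
      show ?thesis by (rule mp[OF mp[OF h]]) (use s' d in auto)
    qed
    have IH2: "coordsL m d \<sigma> (k - 1) ts = map (\<lambda>a. val (m+2) (pre @ a)) (alL (k - 1) ts)"
      using spec[OF 3(2), of pre] s d by blast
    show "coordsL m d \<sigma> k (t # ts) = map (\<lambda>a. val (m+2) (pre @ a)) (alL k (t # ts))"
    proof -
      have "coordsL m d \<sigma> k (t # ts) = ((real (Suc d) + \<sigma>') # coords m (Suc d) \<sigma>' t) @ coordsL m d \<sigma> (k - 1) ts"
        unfolding coordsL.simps Let_def \<sigma>'_def[symmetric] ..
      also have "\<dots> = map (\<lambda>a. val (m+2) (pre @ a)) (alL k (t # ts))"
        unfolding IH1 IH2 v by (simp add: comp_def)
      finally show ?thesis .
    qed
  qed
qed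

lemma Xi_set_al: "Xi_set T = val (maxch T + 2) ` set (al T)"
  using coords_al(1)[of 0 0 "maxch T" T] by (simp add: Xi_set_def)




definition dig :: "nat \<Rightarrow> nat list \<Rightarrow> bool" where
  "dig m a \<longleftrightarrow> (\<forall>c\<in>set a. c \<le> m)"

lemma dig_snoc[simp]: "dig m (a @ [c]) \<longleftrightarrow> dig m a \<and> c \<le> m" by (auto simp: dig_def)

lemma nm_bound: "dig m a \<Longrightarrow> nm (m+2) a < (m+2) ^ length a"
proof (induction a rule: rev_induct)
  case Nil then show ?case by simp
next
  case (snoc c a)
  then have "nm (m+2) a + 1 \<le> (m+2) ^ length a" "c < m + 2" by auto
  then have "(m+2) * nm (m+2) a + c < (m+2) * (nm (m+2) a + 1)" by simp
  also have "\<dots> \<le> (m+2) * (m+2) ^ length a" using \<open>nm (m+2) a + 1 \<le> _\<close> by (intro mult_le_mono2)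
  finally show ?case by simp
qed

lemma fr_bounds:
  assumes "dig m a"
  shows "0 \<le> real (nm (m+2) a) / real (m+2) ^ length a"
    "real (nm (m+2) a) / real (m+2) ^ length a < 1"
proof -
  have "real (nm (m+2) a) < real ((m+2) ^ length a)" using nm_bound[OF assms] by linarith
  then have "real (nm (m+2) a) < real (m+2) ^ length a" by simp
  then show "real (nm (m+2) a) / real (m+2) ^ length a < 1" by simp
qed simp

lemma val_bounds:
  assumes "dig m a"
  shows "real (length a) \<le> val (m+2) a" "val (m+2) a < real (length a) + 1"
  using fr_bounds[OF assms] unfolding val_def by linarith+

lemma divmod_aux: "c < (M::nat) \<Longrightarrow> (M * x + c) mod M = c" "c < (M::nat) \<Longrightarrow> (M * x + c) div M = x"
  by simp_all

lemma nm_inj: "length a = length b \<Longrightarrow> dig m a \<Longrightarrow> dig m b \<Longrightarrow> nm (m+2) a = nm (m+2) b \<Longrightarrow> a = b"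
proof (induction a arbitrary: b rule: rev_induct)
  case Nil then show ?case by simp
next
  case (snoc c a)
  obtain b' d where b: "b = b' @ [d]" using snoc.prems(1) by (cases b rule: rev_exhaust) auto
  have cd: "c < m + 2" "d < m + 2" using snoc.prems b by auto
  have eq: "(m+2) * nm (m+2) a + c = (m+2) * nm (m+2) b' + d" using snoc.prems(4) b by simp
  have "c = d" using arg_cong[OF eq, of "\<lambda>x. x mod (m+2)"] divmod_aux(1)[OF cd(1)] divmod_aux(1)[OF cd(2)] by metis
  moreover have "nm (m+2) a = nm (m+2) b'" using arg_cong[OF eq, of "\<lambda>x. x div (m+2)"] divmod_aux(2)[OF cd(1)] divmod_aux(2)[OF cd(2)] by metis
  ultimately show ?case using snoc b by auto
qed

lemma val_inj:
  assumes "dig m a" "dig m b" "val (m+2) a = val (m+2) b"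
  shows "a = b"
proof -
  have "length a = length b"
    using val_bounds[OF assms(1)] val_bounds[OF assms(2)] assms(3) by linarith
  moreover have "real (nm (m+2) a) = real (nm (m+2) b)"
    using assms(3) calculation unfolding val_def by simp
  ultimately show ?thesis using nm_inj assms by auto
qed

lemma val_snoc: "val (m+2) (a @ [c]) = real (length a) + 1 +
   ((real m + 2) * real (nm (m+2) a) + real c) / ((real m + 2) * (real m + 2) ^ length a)"
  unfolding val_def by (simp add: algebra_simps)

lemma val_simp: "val (m+2) a = real (length a) + real (nm (m+2) a) / (real m + 2) ^ length a"
  unfolding val_def by (simp add: algebra_simps)

lemma aux_frac: "B > 0 \<Longrightarrow> q > 0 \<Longrightarrow> ((B * N + c) / (B * q) - N / q) = c / (B * q)" for B q N c :: real
  by (simp add: field_simps)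

lemma val_step:
  assumes "1 \<le> c"
  shows "val (m+2) a + 1 < val (m+2) (a @ [c])"
proof -
  let ?B = "real m + 2" let ?q = "?B ^ length a" let ?N = "real (nm (m+2) a)"
  have "(?B * ?N + real c) / (?B * ?q) - ?N / ?q = real c / (?B * ?q)" by (rule aux_frac) auto
  moreover have "real c / (?B * ?q) > 0" using assms by simp
  ultimately show ?thesis unfolding val_snoc unfolding val_simp by linarith
qed

lemma val_lastmono:
  assumes "c < c'"
  shows "val (m+2) (a @ [c]) < val (m+2) (a @ [c'])"
proof -
  let ?B = "real m + 2" let ?q = "?B ^ length a" let ?N = "real (nm (m+2) a)"
  have "(?B * ?N + real c) / (?B * ?q) < (?B * ?N + real c') / (?B * ?q)"
    using assms by (intro divide_strict_right_mono) auto
  then show ?thesis unfolding val_snoc by simp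
qed

lemma frac_aux: "q > 0 \<Longrightarrow> B > 0 \<Longrightarrow> x / q < y / (B * q) \<Longrightarrow> x * B < (y::real)"
proof -
  assume h: "q > 0" "B > 0" "x / q < y / (B * q)"
  have "x / q * (B * q) < y / (B * q) * (B * q)" using h by (intro mult_strict_right_mono) auto
  then show ?thesis using h by (simp add: field_simps)
qed

lemma val_max:
  assumes "dig m a" "dig m a'" "c \<le> m" "val (m+2) a' + 1 < val (m+2) (a @ [c])"
  shows "val (m+2) a' \<le> val (m+2) a"
proof -
  have b: "dig m (a @ [c])" using assms by simp
  note va = val_bounds[OF assms(1)] and va' = val_bounds[OF assms(2)] and vb = val_bounds[OF b]
  consider "length a' < length a" | "length a' > length a" | "length a' = length a" by linarith
  then show ?thesis
  proof cases
    case 1 then show ?thesis using va va' by linarith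
  next
    case 2 then show ?thesis using vb va' assms(4) by simp
  next
    case 3
    let ?B = "real m + 2" let ?q = "?B ^ length a" let ?N = "real (nm (m+2) a)" let ?N' = "real (nm (m+2) a')"
    have qp: "?q > 0" by simp
    have "?N' / ?q < (?B * ?N + real c) / (?B * ?q)"
      using assms(4) unfolding val_snoc unfolding val_simp 3 by linarith
    then have "?N' * ?B < ?B * ?N + real c" using qp by (intro frac_aux[of ?q ?B]) auto
    also have "\<dots> < ?B * ?N + ?B" using assms(3) by simp
    finally have "?N' * ?B < (?N + 1) * ?B" by (simp add: algebra_simps)
    then have "?N' < ?N + 1" by simp
    then have "nm (m+2) a' \<le> nm (m+2) a" by linarith
    then have "?N' / ?q \<le> ?N / ?q" using qp by (intro divide_right_mono) auto
    then show ?thesis unfolding val_simp 3 by simp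
  qed
qed




locale xiloc =
  fixes T :: ptree
  assumes pos: "1 \<le> nnodes T"
begin

definition "mm = maxch T"
definition "nn = nnodes T"
definition "SS = Xi_set T"
definition "XX = xpt SS"
definition "VV a = (if a = [] then XX 0 else val (mm+2) a)"
definition "idx a = the_inv_into {0..nn} XX (VV a)"

lemma nn_pos: "1 \<le> nn" using pos by (simp add: nn_def)

lemma SS_eq: "SS = val (mm+2) ` set (al T)"
  by (simp add: SS_def mm_def Xi_set_al)

lemma AT_al: "set (al T) = AT T - {[]}"
  using al_nonempty[of T] by (auto simp: AT_def)

lemma dig_AT: "a \<in> AT T \<Longrightarrow> dig mm a"
  using AT_digits[of a T] by (auto simp: dig_def mm_def)

lemma val_inj_AT: "inj_on (val (mm+2)) (AT T)"
proof (rule inj_onI)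
  fix a b assume h: "a \<in> AT T" "b \<in> AT T" "val (mm+2) a = val (mm+2) b"
  show "a = b" by (rule val_inj[OF dig_AT[OF h(1)] dig_AT[OF h(2)] h(3)])
qed

lemma finite_SS: "finite SS" by (simp add: SS_eq)

lemma card_SS: "card SS = nn"
proof -
  have "card SS = card (set (al T))"
    unfolding SS_eq by (rule card_image, rule inj_on_subset[OF val_inj_AT]) (auto simp: AT_def)
  also have "\<dots> = length (al T)" using al_distinct(1) by (rule distinct_card)
  also have "\<dots> = nn" by (simp add: al_length nn_def)
  finally show ?thesis .
qed

lemmas XP = xpt_props[OF finite_SS card_SS nn_pos, folded XX_def]
lemmas Xle = xpt_le_iff[OF finite_SS card_SS nn_pos, folded XX_def]
lemmas Xless = xpt_less_iff[OF finite_SS card_SS nn_pos, folded XX_def]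

lemma X_inj: "inj_on XX {0..nn}"
proof (rule inj_onI)
  fix i j assume "i \<in> {0..nn}" "j \<in> {0..nn}" "XX i = XX j"
  then show "i = j" using Xle[of i j] Xle[of j i] by auto
qed

lemma X0_notin: "XX 0 \<notin> SS"
proof
  assume "XX 0 \<in> SS"
  then obtain j where "j \<in> {1..nn}" "XX 0 = XX j" using XP(2) by (metis imageE)
  then show False using XP(1)[of 0 j] by auto
qed

lemma X1_le: "z \<in> SS \<Longrightarrow> XX 1 \<le> z"
proof -
  assume "z \<in> SS"
  then obtain j where "j \<in> {1..nn}" "z = XX j" using XP(2) by (metis imageE)
  then show ?thesis using Xle[of 1 j] nn_pos by auto
qed

lemma VV_image: "VV ` AT T = XX ` {0..nn}"
proof -
  have "XX ` {0..nn} = insert (XX 0) (XX ` {1..nn})"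
    by (auto simp: image_def) (metis atLeastAtMost_iff le_0_eq not_less_eq_eq)
  also have "\<dots> = insert (XX 0) SS" using XP(2) by simp
  also have "\<dots> = VV ` AT T"
    unfolding SS_eq AT_al by (auto simp: VV_def image_def AT_def)
  finally show ?thesis by simp
qed

lemma VV_inj: "inj_on VV (AT T)"
proof (rule inj_onI)
  fix a b assume ab: "a \<in> AT T" "b \<in> AT T" "VV a = VV b"
  have Sv: "val (mm+2) x \<in> SS" if "x \<in> AT T" "x \<noteq> []" for x
    using that unfolding SS_eq AT_al by auto
  show "a = b"
  proof (cases "a = []"; cases "b = []")
    assume "a \<noteq> []" "b \<noteq> []" then show ?thesis
      using ab val_inj_AT by (auto simp: VV_def inj_on_def)
  next
    assume "a \<noteq> []" "b = []" then show ?thesis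
      using ab X0_notin Sv[of a] by (simp add: VV_def)
  next
    assume "a = []" "b \<noteq> []" then show ?thesis
      using ab X0_notin Sv[of b] by (simp add: VV_def)
  next
    assume "a = []" "b = []" then show ?thesis by simp
  qed
qed

lemma idx_props:
  assumes "a \<in> AT T"
  shows "idx a \<in> {0..nn}" "XX (idx a) = VV a"
proof -
  have "VV a \<in> XX ` {0..nn}" using assms VV_image by auto
  then show "idx a \<in> {0..nn}" "XX (idx a) = VV a"
    unfolding idx_def using the_inv_into_into[OF X_inj, of "VV a" "{0..nn}"] f_the_inv_into_f[OF X_inj] by auto
qed

lemma idx_Nil: "idx [] = 0"
  unfolding idx_def VV_def by (simp add: the_inv_into_f_f[OF X_inj])

lemma idx_inj: "a \<in> AT T \<Longrightarrow> b \<in> AT T \<Longrightarrow> idx a = idx b \<Longrightarrow> a = b"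
  using idx_props VV_inj by (metis inj_on_eq_iff)

lemma idx_surj: "i \<in> {0..nn} \<Longrightarrow> \<exists>a\<in>AT T. idx a = i"
proof -
  assume i: "i \<in> {0..nn}"
  then obtain a where a: "a \<in> AT T" "VV a = XX i" using VV_image by (metis imageE imageI)
  then have "XX (idx a) = XX i" using idx_props by simp
  then have "idx a = i" using idx_props(1)[OF a(1)] i X_inj by (auto simp: inj_on_def)
  then show ?thesis using a by blast
qed

lemma idx_pos: "a \<in> AT T \<Longrightarrow> a \<noteq> [] \<Longrightarrow> idx a \<in> {1..nn}"
  using idx_props[of a] idx_Nil idx_inj[of a "[]"] by fastforce

lemma XX0_le: "a \<in> AT T \<Longrightarrow> XX 0 \<le> VV a"
  using idx_props[of a] Xle by fastforce

lemma K1: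
  assumes "a @ [c] \<in> AT T"
  shows "VV a + 1 < VV (a @ [c])"
proof (cases "a = []")
  case True
  have "val (mm+2) [c] \<in> SS" using assms True unfolding SS_eq AT_al by auto
  then have "XX 1 \<le> val (mm+2) [c]" by (rule X1_le)
  then show ?thesis using True XP(3) by (simp add: VV_def)
next
  case False
  have "1 \<le> c" using dig_AT assms AT_digits by (metis in_set_conv_decomp)
  then show ?thesis using False val_step by (simp add: VV_def)
qed

lemma K2:
  assumes "a @ [c] \<in> AT T" "a' \<in> AT T" "VV a' + 1 < VV (a @ [c])"
  shows "VV a' \<le> VV a"
proof (cases "a' = []")
  case True then show ?thesis using XX0_le[of a] AT_prefix[OF assms(1)] by (simp add: VV_def)
next
  case False
  note d = dig_AT[OF assms(1)] dig_AT[OF assms(2)]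
  show ?thesis
  proof (cases "a = []")
    case True
    have "val (mm+2) [c] < 2" using val_bounds(2)[of mm "[c]"] d True by simp
    moreover have "1 \<le> val (mm+2) a'" using val_bounds(1)[OF d(2)] False
      by (metis One_nat_def Suc_leI length_greater_0_conv of_nat_1 of_nat_mono order_trans)
    ultimately show ?thesis using assms(3) True False by (simp add: VV_def)
  next
    case aF: False
    then show ?thesis using val_max[of mm a a' c] d assms(3) False by (simp add: VV_def)
  qed
qed

lemma parent_idx:
  assumes "b \<in> AT T" "b \<noteq> []"
  shows "parent nn SS (idx b) = idx (butlast b)"
proof -
  define a where "a = butlast b"
  define c where "c = last b"
  have b: "b = a @ [c]" using assms(2) by (simp add: a_def c_def)
  have aA: "a \<in> AT T" using AT_prefix assms(1) b by blast
  have ib: "idx b \<in> {1..nn}" using idx_pos assms by auto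
  note PP = parent_props[OF finite_SS card_SS nn_pos ib, folded XX_def]
  have "idx a \<le> parent nn SS (idx b)"
    using PP(3)[of "idx a"] idx_props[OF aA] idx_props[OF assms(1)] K1[of a c] assms(1) b by auto
  moreover have "parent nn SS (idx b) \<le> idx a"
  proof -
    have pn: "parent nn SS (idx b) \<in> {0..nn}" using PP(1) ib by auto
    obtain a' where a': "a' \<in> AT T" "idx a' = parent nn SS (idx b)" using idx_surj[OF pn] by blast
    have "VV a' + 1 < VV b" using PP(2) a' idx_props[OF a'(1)] idx_props[OF assms(1)] by simp
    then have "VV a' \<le> VV a" using K2[of a c a'] assms(1) b a' by simp
    then have "XX (idx a') \<le> XX (idx a)" using idx_props a'(1) aA by simp
    then show ?thesis using Xle idx_props(1)[OF a'(1)] idx_props(1)[OF aA] a'(2) by auto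
  qed
  ultimately show ?thesis by (simp add: a_def)
qed

lemma idx_lastmono:
  assumes "pre @ [c] \<in> AT T" "pre @ [c'] \<in> AT T" "c < c'"
  shows "idx (pre @ [c]) < idx (pre @ [c'])"
proof -
  have "VV (pre @ [c]) < VV (pre @ [c'])" using val_lastmono[OF assms(3)] by (simp add: VV_def)
  then have "XX (idx (pre @ [c])) < XX (idx (pre @ [c']))" using idx_props assms by simp
  then show ?thesis using Xless idx_props(1) assms by auto
qed

lemma children_idx:
  assumes "pre \<in> AT T" "subt T pre = Node ts"
  shows "children nn SS (idx pre) = map (\<lambda>j. idx (pre @ [length ts - j])) [0..<length ts]"
proof -
  let ?len = "length ts"
  let ?h = "\<lambda>c. idx (pre @ [c])"
  let ?P = "\<lambda>i. idx pre < i \<and> parent nn SS i = idx pre"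
  have inA: "pre @ [c] \<in> AT T \<longleftrightarrow> 1 \<le> c \<and> c \<le> ?len" for c using AT_snoc(1)[OF assms] .
  have r1: "rev (children nn SS (idx pre)) = filter ?P [1..<Suc nn]"
    unfolding children_def by (simp add: rev_filter)
  have r2: "rev (map (\<lambda>j. idx (pre @ [?len - j])) [0..<?len]) = map ?h [1..<Suc ?len]"
    by (rule nth_equalityI) (auto simp: rev_nth simp del: upt_Suc)
  have "filter ?P [1..<Suc nn] = map ?h [1..<Suc ?len]"
  proof (rule sorted_distinct_set_unique)
    have "sorted_wrt (<) (map ?h [1..<Suc ?len])"
      unfolding sorted_wrt_map
      by (rule sorted_wrt_mono_rel[OF _ sorted_wrt_upt]) (auto intro!: idx_lastmono simp: inA)
    then show "sorted (map ?h [1..<Suc ?len])" "distinct (map ?h [1..<Suc ?len])"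
      by (auto simp: strict_sorted_iff)
    show "sorted (filter ?P [1..<Suc nn])" by (simp add: sorted_wrt_filter del: upt_Suc)
    show "distinct (filter ?P [1..<Suc nn])" by simp
    show "set (filter ?P [1..<Suc nn]) = set (map ?h [1..<Suc ?len])"
    proof (rule set_eqI, rule iffI)
      fix i assume "i \<in> set (filter ?P [1..<Suc nn])"
      then have i: "i \<in> {1..nn}" "?P i" by auto
      obtain b where b: "b \<in> AT T" "idx b = i" using idx_surj[of i] i by auto
      have bne: "b \<noteq> []" using b i idx_Nil by auto
      have "idx (butlast b) = idx pre" using parent_idx[OF b(1) bne] i b by simp
      moreover have "butlast b \<in> AT T" using AT_prefix[of "butlast b" "[last b]"] b bne by simp
      ultimately have "butlast b = pre" using idx_inj assms(1) by blast
      then have bb: "b = pre @ [last b]" using bne by (metis append_butlast_last_id)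
      then have "1 \<le> last b \<and> last b \<le> ?len" using inA b by metis
      moreover have "i = ?h (last b)" using b bb by metis
      ultimately show "i \<in> set (map ?h [1..<Suc ?len])" unfolding set_map set_upt by auto
    next
      fix i assume "i \<in> set (map ?h [1..<Suc ?len])"
      then obtain c where c: "1 \<le> c" "c \<le> ?len" "i = ?h c" by auto
      have bA: "pre @ [c] \<in> AT T" using inA c by simp
      have ipos: "i \<in> {1..nn}" using idx_pos[OF bA] c by simp
      have par: "parent nn SS i = idx pre" using parent_idx[OF bA] c by simp
      have "VV pre < VV (pre @ [c])" using K1[OF bA] by simp
      then have "XX (idx pre) < XX i" using idx_props assms(1) bA c by simp
      then have "idx pre < i" using Xless idx_props(1) assms(1) ipos by auto
      then show "i \<in> set (filter ?P [1..<Suc nn])" using ipos par by (simp del: upt_Suc)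
    qed
  qed
  then have "rev (children nn SS (idx pre)) = rev (map (\<lambda>j. idx (pre @ [?len - j])) [0..<?len])"
    using r1 r2 by simp
  then show ?thesis by simp
qed

lemma build_idx: "\<forall>pre. pre \<in> AT T \<longrightarrow> subt T pre = t \<longrightarrow> build nn SS (idx pre) = t"
proof (induction t)
  case (Node ts)
  show ?case
  proof (intro allI impI)
    fix pre assume pre: "pre \<in> AT T" "subt T pre = Node ts"
    have "build nn SS (idx pre) = Node (map (build nn SS) (children nn SS (idx pre)))" by (simp add: build.simps)
    also have "\<dots> = Node (map (\<lambda>j. build nn SS (idx (pre @ [length ts - j]))) [0..<length ts])"
      by (simp add: children_idx[OF pre])
    also have "map (\<lambda>j. build nn SS (idx (pre @ [length ts - j]))) [0..<length ts] = map (\<lambda>j. ts ! j) [0..<length ts]"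
    proof (rule map_cong[OF refl])
      fix j assume "j \<in> set [0..<length ts]"
      then have j: "j < length ts" by simp
      have inA: "pre @ [length ts - j] \<in> AT T" using AT_snoc(1)[OF pre] j by simp
      have st: "subt T (pre @ [length ts - j]) = ts ! j" using AT_snoc(2)[OF pre inA] j by simp
      show "build nn SS (idx (pre @ [length ts - j])) = ts ! j"
        using Node.IH[of "ts ! j"] j inA st by auto
    qed
    also have "map (\<lambda>j. ts ! j) [0..<length ts] = ts" by (rule map_nth)
    finally show "build nn SS (idx pre) = Node ts" .
  qed
qed

lemma Lambda_Xi: "Lambda_tree nn SS = T"
  using spec[OF build_idx[of T], of "[]"] idx_Nil by (simp add: Lambda_tree_def)

end


lemma Xi_facts:
  assumes "T \<in> Tn n" "n \<ge> 1"
  shows "Xi_set T \<in> starting_sets n" "Lambda_tree n (Xi_set T) = T"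
proof -
  have nn: "nnodes T = n" using assms(1) by (simp add: Tn_def)
  interpret xiloc T by unfold_locales (use nn assms(2) in simp)
  show "Xi_set T \<in> starting_sets n" using finite_SS card_SS nn
    by (simp add: starting_sets_def SS_def nn_def)
  show "Lambda_tree n (Xi_set T) = T" using Lambda_Xi nn by (simp add: SS_def nn_def)
qed

lemma poset_iso_refl: "poset_iso n R R"
  unfolding poset_iso_def by (rule exI[of _ id]) auto

lemma iso_Lambda:
  assumes "S \<in> starting_sets n" "S' \<in> starting_sets n" "n \<ge> 1"
    "poset_iso n (uip_order n S) (uip_order n S')"
  shows "Lambda_tree n S = Lambda_tree n S'"
  using build_cong iso_parent assms unfolding starting_sets_def Lambda_tree_def by auto

lemma Lambda_inj:
  assumes "S \<in> starting_sets n" "S' \<in> starting_sets n" "n \<ge> 1"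
    "Lambda_tree n S = Lambda_tree n S'"
  shows "uip_order n S = uip_order n S'"
proof -
  have f: "finite S" "card S = n" "finite S'" "card S' = n" using assms by (auto simp: starting_sets_def)
  have p: "\<forall>i\<in>{1..n}. parent n S i = parent n S' i" using Lambda_inj_parent[OF f assms(3,4)] .
  show ?thesis
  proof (rule set_eqI)
    fix x :: "nat \<times> nat"
    obtain i j where x: "x = (i, j)" by fastforce
    show "x \<in> uip_order n S \<longleftrightarrow> x \<in> uip_order n S'"
      unfolding x uip_char[OF f(1,2) assms(3)] uip_char[OF f(3,4) assms(3)] using p by auto
  qed
qed

lemma uio_mem: "S \<in> starting_sets n \<Longrightarrow> uip_order n S \<in> unit_interval_orders n"
  by (auto simp: unit_interval_orders_def)

lemma Lambda_poset_class:
  assumes "S \<in> starting_sets n" "n \<ge> 1"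
  shows "Lambda_poset n (iso_rel n `` {uip_order n S}) = Lambda_tree n S"
proof -
  let ?C = "iso_rel n `` {uip_order n S}"
  have ex: "\<exists>S'. S' \<in> starting_sets n \<and> uip_order n S' \<in> ?C"
    using assms(1) uio_mem[OF assms(1)] poset_iso_refl by (auto simp: iso_rel_def)
  define S' where "S' = (SOME S'. S' \<in> starting_sets n \<and> uip_order n S' \<in> ?C)"
  have S': "S' \<in> starting_sets n" "uip_order n S' \<in> ?C"
    using someI_ex[OF ex] unfolding S'_def by blast+
  then have "poset_iso n (uip_order n S) (uip_order n S')" by (simp add: iso_rel_def)
  then have "Lambda_tree n S = Lambda_tree n S'" using iso_Lambda assms S' by blast
  then show ?thesis unfolding Lambda_poset_def S'_def[symmetric] by simp
qed

lemma Pn_elem: "P \<in> Pn n \<Longrightarrow> \<exists>S\<in>starting_sets n. P = iso_rel n `` {uip_order n S}"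
  unfolding Pn_def by (auto elim!: quotientE simp: unit_interval_orders_def)

lemma Pn_intro: "S \<in> starting_sets n \<Longrightarrow> iso_rel n `` {uip_order n S} \<in> Pn n"
  unfolding Pn_def by (rule quotientI, rule uio_mem)

theorem mainTheorem2:
  fixes n :: nat
  assumes "n \<ge> 1"
  shows "(\<forall>S\<in>starting_sets n. \<forall>S'\<in>starting_sets n.
            poset_iso n (uip_order n S) (uip_order n S') \<longrightarrow> Lambda_tree n S = Lambda_tree n S')
       \<and> bij_betw (Lambda_poset n) (Pn n) (Tn n)
       \<and> (\<forall>T\<in>Tn n. Xi_set T \<in> starting_sets n \<and> Xi_poset n T \<in> Pn n
                    \<and> Lambda_poset n (Xi_poset n T) = T \<and> Lambda_tree n (Xi_set T) = T)
       \<and> (\<forall>P\<in>Pn n. Xi_poset n (Lambda_poset n P) = P)"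
proof (intro conjI ballI impI)
  show "Lambda_tree n S = Lambda_tree n S'"
    if "S \<in> starting_sets n" "S' \<in> starting_sets n" "poset_iso n (uip_order n S) (uip_order n S')" for S S'
    using iso_Lambda that assms by blast
  show "Xi_set T \<in> starting_sets n" if "T \<in> Tn n" for T using Xi_facts that assms by blast
  show "Lambda_tree n (Xi_set T) = T" if "T \<in> Tn n" for T using Xi_facts that assms by blast
  show "Xi_poset n T \<in> Pn n" if "T \<in> Tn n" for T
    unfolding Xi_poset_def using Pn_intro Xi_facts that assms by blast
  show "Lambda_poset n (Xi_poset n T) = T" if "T \<in> Tn n" for T
    unfolding Xi_poset_def using Lambda_poset_class Xi_facts that assms by simp
  show "Xi_poset n (Lambda_poset n P) = P" if PP: "P \<in> Pn n" for P
  proof -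
    obtain S where S: "S \<in> starting_sets n" "P = iso_rel n `` {uip_order n S}" using Pn_elem[OF PP] by blast
    have LP: "Lambda_poset n P = Lambda_tree n S" using Lambda_poset_class S assms by simp
    have f: "finite S" "card S = n" using S by (auto simp: starting_sets_def)
    have T: "Lambda_tree n S \<in> Tn n" using nnodes_Lambda[OF f assms] by (simp add: Tn_def)
    have "uip_order n (Xi_set (Lambda_tree n S)) = uip_order n S"
      using Lambda_inj[OF Xi_facts(1)[OF T assms] S(1) assms] Xi_facts(2)[OF T assms] by simp
    then show ?thesis unfolding LP Xi_poset_def using S(2) by simp
  qed
  show "bij_betw (Lambda_poset n) (Pn n) (Tn n)"
  proof (rule bij_betw_imageI)
    show "inj_on (Lambda_poset n) (Pn n)"
    proof (rule inj_onI)
      fix P Q assume PQ: "P \<in> Pn n" "Q \<in> Pn n" "Lambda_poset n P = Lambda_poset n Q"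
      obtain S where S: "S \<in> starting_sets n" "P = iso_rel n `` {uip_order n S}" using Pn_elem[OF PQ(1)] by blast
      obtain S' where S': "S' \<in> starting_sets n" "Q = iso_rel n `` {uip_order n S'}" using Pn_elem[OF PQ(2)] by blast
      have "Lambda_tree n S = Lambda_tree n S'" using PQ(3) Lambda_poset_class S S' assms by simp
      then have "uip_order n S = uip_order n S'" using Lambda_inj S' S assms by blast
      then show "P = Q" using S S' by simp
    qed
    show "Lambda_poset n ` Pn n = Tn n"
    proof
      show "Lambda_poset n ` Pn n \<subseteq> Tn n"
      proof
        fix T assume "T \<in> Lambda_poset n ` Pn n"
        then obtain P where P: "P \<in> Pn n" "T = Lambda_poset n P" by blast
        obtain S where S: "S \<in> starting_sets n" "P = iso_rel n `` {uip_order n S}" using Pn_elem[OF P(1)] by blast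
        have f: "finite S" "card S = n" using S by (auto simp: starting_sets_def)
        show "T \<in> Tn n" using P S Lambda_poset_class assms nnodes_Lambda[OF f assms] by (simp add: Tn_def)
      qed
      show "Tn n \<subseteq> Lambda_poset n ` Pn n"
      proof
        fix T assume T: "T \<in> Tn n"
        have "T = Lambda_poset n (iso_rel n `` {uip_order n (Xi_set T)})"
          using Lambda_poset_class Xi_facts T assms by simp
        then show "T \<in> Lambda_poset n ` Pn n" using Pn_intro Xi_facts(1)[OF T assms] by blast
      qed
    qed
  qed
qed



end
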